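(* Let $C$ be an $A$-code of length $2$ with canonical generator matrix $\begin{pmatrix}g_1&g_2\\0&g_3\end{pmatrix}$, where $g_1,g_3$ are nonzero monic divisors of $f$ in $\mathbb{F}[x]$, $g_3$ divides $(f/g_1)g_2$, and $\deg g_2<\deg g_3$. Then the following are equivalent: (i) $C$ is self-dual, i.e. $C=C^\perp$; (ii) $\deg g_1+\deg g_3=m$, $g_3^2=g_2g_3=g_1^2+g_2^2=0$ in $A$, and $g_1^2\mid f$ in $\mathbb{F}[x]$; (iii) there exist $g',f',r\in\mathbb{F}[x]$ with $g'^2=rf'-1$ such that $f=g_1^2f'$, $g_3=g_1f'$ and $g_2=g_1g'$.
   Context: Let $\mathbb{F}$ be a finite field, $f(x)\in\mathbb{F}[x]$ monic of degree $m$, $A=\mathbb{F}[x]/\langle f(x)\rangle$, elements identified with polynomials of degree $<m$. An $A$-code of length $l$ is an $A$-submodule of $A^l$; $C^\perp=\{a\in A^l:\sum_ia_ic_i=0\ \forall c\in C\}$. The canonical generator matrix (CGM) of a nonzero $A$-code $C$ is the unique matrix over $A$ whose rows generate $C$, are monic with strictly increasing leading indices (position of first nonzero entry), have leading entries dividing $f$, satisfy that $(f/L_i)\cdot(\text{row }i)$ is an $A$-combination of later rows ($L_i$ the leading entry of row $i$), and such that every entry above a leading entry has smaller degree than it. *)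

theory Defs
  imports "HOL-Computational_Algebra.Polynomial"
begin

(* A = F[x]/<f>, elements represented by polynomials p with p mod f = p (degree < deg f).
   A^2 is represented by pairs of such polynomials; multiplication in A is product mod f. *)

definition A_elem :: "'a::field poly \<Rightarrow> 'a poly \<Rightarrow> bool" where
  "A_elem f p \<longleftrightarrow> p mod f = p"

definition code2 :: "'a::field poly \<Rightarrow> 'a poly \<Rightarrow> 'a poly \<Rightarrow> 'a poly \<Rightarrow> ('a poly \<times> 'a poly) set" where
  "code2 f g1 g2 g3 = {((a * g1) mod f, (a * g2 + b * g3) mod f) | a b. A_elem f a \<and> A_elem f b}"

definition dual2 :: "'a::field poly \<Rightarrow> ('a poly \<times> 'a poly) set \<Rightarrow> ('a poly \<times> 'a poly) set" where
  "dual2 f C = {(u, v). A_elem f u \<and> A_elem f v \<and>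
                  (\<forall>(c1, c2) \<in> C. (u * c1 + v * c2) mod f = 0)}"

(* The 2x2 matrix ((g1, g2), (0, g3)) over A is the canonical generator matrix of the code
   it generates: leading entries g1, g3 are monic divisors of f which are nonzero elements of A
   (degree < deg f); all entries are elements of A; (f/g1)*row1 is an A-multiple of row2,
   i.e. g3 divides (f/g1) g2; the entry g2 above the leading entry g3 has smaller degree
   (deg 0 = -infinity). *)
definition is_CGM2 :: "'a::field poly \<Rightarrow> 'a poly \<Rightarrow> 'a poly \<Rightarrow> 'a poly \<Rightarrow> bool" where
  "is_CGM2 f g1 g2 g3 \<longleftrightarrow>
     lead_coeff g1 = 1 \<and> lead_coeff g3 = 1 \<and> g1 dvd f \<and> g3 dvd f \<and>
     degree g1 < degree f \<and> degree g3 < degree f \<and> A_elem f g2 \<and>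
     g3 dvd (f div g1) * g2 \<and> (g2 = 0 \<or> degree g2 < degree g3)"

end

theory Submission
  imports Defs
begin

lemma poly_bezout:
  fixes x y :: "'a::field poly"
  shows "\<exists>d s t. d dvd x \<and> d dvd y \<and> d = s*x + t*y"
proof (induction y arbitrary: x rule: measure_induct_rule[where f="\<lambda>y. if y = 0 then 0 else Suc (degree y)"])
  case (less y)
  show ?case
  proof (cases "y = 0")
    case True
    show ?thesis by (rule exI[of _ x], rule exI[of _ 1], rule exI[of _ 0]) (simp add: True)
  next
    case False
    have "(if x mod y = 0 then 0 else Suc (degree (x mod y))) < (if y = 0 then 0 else Suc (degree y))"
      using False degree_mod_less[of y x] by auto
    then obtain d s t where h: "d dvd y" "d dvd x mod y" "d = s*y + t*(x mod y)"
      using less by blast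
    have xe: "x = (x div y) * y + x mod y" by simp
    have "d dvd x" using h(1,2) xe by (metis dvd_add dvd_mult)
    moreover have "d = t * x + (s - t * (x div y)) * y"
      using h(3) xe by (simp add: algebra_simps mod_div_mult_eq minus_div_mult_eq_mod[symmetric])
    ultimately show ?thesis using h(1) by blast
  qed
qed

lemma sq_dvd_sq:
  fixes a b :: "'a::field poly"
  assumes "a^2 dvd b^2"
  shows "a dvd b"
proof (cases "a = 0")
  case True thus ?thesis using assms by simp
next
  case False
  obtain d s t where h: "d dvd a" "d dvd b" "d = s*a + t*b" using poly_bezout by blast
  obtain a' where a': "a = d*a'" using h(1) by blast
  obtain b' where b': "b = d*b'" using h(2) by blast
  have d0: "d \<noteq> 0" using False a' by auto
  have "d * 1 = d * (s*a' + t*b')" using h(3) a' b' by (simp add: algebra_simps)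
  hence one: "1 = s*a' + t*b'" using d0 by (metis mult_left_cancel)
  have "d^2 * a'^2 dvd d^2 * b'^2" using assms a' b' by (simp add: power_mult_distrib)
  hence "a'^2 dvd b'^2" using d0 by simp
  hence ab: "a' dvd b'^2" by (metis dvd_mult_left power2_eq_square)
  have "1 = a' * (s*s*a' + 2*s*t*b') + t^2 * b'^2"
    using arg_cong[OF one, of "\<lambda>z. z^2"] by (simp add: power2_eq_square algebra_simps)
  hence "a' dvd 1" using ab by (metis dvd_add dvd_mult dvd_triv_left)
  hence "a' dvd b'" by (rule dvd_trans) simp
  thus ?thesis using a' b' by simp
qed

lemma monic_dvd_eq:
  fixes p q :: "'a::field poly"
  assumes "lead_coeff p = 1" "lead_coeff q = 1" "p dvd q" "degree q \<le> degree p"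
  shows "p = q"
proof -
  from assms(3) obtain k where k: "q = p * k" by blast
  have q0: "q \<noteq> 0" using assms(2) by auto
  hence k0: "k \<noteq> 0" "p \<noteq> 0" using k by auto
  have "degree q = degree p + degree k" using k k0 degree_mult_eq by blast
  hence dk: "degree k = 0" using assms(4) by simp
  have "lead_coeff k = 1" using assms(1,2) k lead_coeff_mult by (metis mult_1)
  moreover have "[:coeff k 0:] = k" using dk by (rule degree_0_id)
  ultimately have "k = 1" using dk by (simp add: one_pCons)
  thus ?thesis using k by simp
qed

lemma dvd_mods: "(f::'a::field poly) dvd (x mod f)*u + (y mod f)*v \<longleftrightarrow> f dvd x*u + y*v"
  by (smt (verit, best) dvd_eq_mod_eq_0 mod_add_cong mod_mult_left_eq)

lemma dvd_mod1: "(f::'a::field poly) dvd (x mod f)*u \<longleftrightarrow> f dvd x*u"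
  using dvd_mods[of f x u 0 0] by simp

lemma A_mod: "A_elem f (x mod f)"
  unfolding A_elem_def by simp

lemma dual_mem:
  fixes f g1 g2 g3 :: "'a::field poly"
  assumes "degree f > 0" "A_elem f g1" "A_elem f g2" "A_elem f g3"
  shows "(u,v) \<in> dual2 f (code2 f g1 g2 g3) \<longleftrightarrow>
         A_elem f u \<and> A_elem f v \<and> f dvd u*g1 + v*g2 \<and> f dvd v*g3"
proof
  assume h: "(u,v) \<in> dual2 f (code2 f g1 g2 g3)"
  have one: "A_elem f 1" using assms(1) unfolding A_elem_def by (simp add: mod_poly_less)
  have z: "A_elem f 0" unfolding A_elem_def by simp
  have "(g1, g2) \<in> code2 f g1 g2 g3"
    unfolding code2_def mem_Collect_eq
    apply (rule exI[of _ 1], rule exI[of _ 0]) using one z assms(2,3) unfolding A_elem_def by simp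
  hence 1: "f dvd u*g1 + v*g2" using h unfolding dual2_def by (auto simp: dvd_eq_mod_eq_0)
  have "(0, g3) \<in> code2 f g1 g2 g3"
    unfolding code2_def mem_Collect_eq
    apply (rule exI[of _ 0], rule exI[of _ 1]) using one z assms(4) unfolding A_elem_def by simp
  hence 2: "f dvd v*g3" using h unfolding dual2_def by (auto simp: dvd_eq_mod_eq_0)
  show "A_elem f u \<and> A_elem f v \<and> f dvd u*g1 + v*g2 \<and> f dvd v*g3"
    using 1 2 h unfolding dual2_def by auto
next
  assume h: "A_elem f u \<and> A_elem f v \<and> f dvd u*g1 + v*g2 \<and> f dvd v*g3"
  have "(u * c1 + v * c2) mod f = 0" if "(c1,c2) \<in> code2 f g1 g2 g3" for c1 c2
  proof -
    from that obtain a b where c: "c1 = (a*g1) mod f" "c2 = (a*g2+b*g3) mod f"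
      unfolding code2_def by auto
    have "f dvd a*(u*g1 + v*g2) + b*(v*g3)" using h by simp
    hence "f dvd (a*g1)*u + (a*g2+b*g3)*v" by (simp add: algebra_simps)
    hence "f dvd ((a*g1) mod f)*u + ((a*g2+b*g3) mod f)*v" using dvd_mods by blast
    thus ?thesis using c by (simp add: dvd_eq_mod_eq_0 algebra_simps)
  qed
  thus "(u,v) \<in> dual2 f (code2 f g1 g2 g3)" using h unfolding dual2_def by auto
qed

lemma core:
  fixes f g1 g2 g3 :: "'a::field poly"
  assumes "lead_coeff g1 = 1" "f dvd g3 ^ 2" "f dvd g2 * g3" "f dvd g1 ^ 2 + g2 ^ 2" "g1 ^ 2 dvd f"
  shows "\<exists>f' g' r. f = g1^2 * f' \<and> g2 = g1 * g' \<and> g' ^ 2 = r * f' - 1 \<and> g1 * f' dvd g3"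
proof -
  obtain f' where f': "f = g1^2 * f'" using assms(5) by blast
  have g10: "g1 \<noteq> 0" using assms(1) by auto
  have "g1^2 dvd g1^2 + g2^2" using assms(4,5) dvd_trans by blast
  hence "g1^2 dvd g2^2" by (simp add: dvd_add_right_iff)
  hence "g1 dvd g2" by (rule sq_dvd_sq)
  then obtain g' where g': "g2 = g1 * g'" by blast
  have "g1^2 * f' dvd g1^2 * (1 + g'^2)" using assms(4) f' g'
    by (simp add: algebra_simps power_mult_distrib)
  hence "f' dvd 1 + g'^2" using g10 by simp
  then obtain r where r: "1 + g'^2 = f' * r" by blast
  have rr: "g'^2 = r * f' - 1" using r by (simp add: algebra_simps)
  have "g1 * (g1 * f') dvd g1 * (g' * g3)" using assms(3) f' g'
    by (simp add: algebra_simps power2_eq_square)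
  hence a: "g1 * f' dvd g' * g3" using g10 by simp
  have "g1^2 dvd g3^2" using assms(2,5) dvd_trans by blast
  hence "g1 dvd g3" by (rule sq_dvd_sq)
  hence b: "g1 * f' dvd r * f' * g3" by (simp add: mult_dvd_mono mult.commute)
  have c: "g1 * f' dvd g'^2 * g3" using a by (simp add: power2_eq_square mult.assoc)
  have "g1 * f' dvd r * f' * g3 - g'^2 * g3" using b c by (rule dvd_diff)
  moreover have "r * f' * g3 - g'^2 * g3 = g3"
  proof -
    have e: "r*f' - g'^2 = 1" using r by (metis add_diff_cancel_right' mult.commute)
    have "r * f' * g3 - g'^2 * g3 = (r*f' - g'^2) * g3" by (simp add: algebra_simps)
    thus ?thesis using e by simp
  qed
  ultimately have "g1 * f' dvd g3" by simp
  thus ?thesis using f' g' rr by blast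
qed

theorem mainTheorem7:
  fixes f g1 g2 g3 :: "'a::{finite, field} poly"
    and C :: "('a poly \<times> 'a poly) set"
  assumes "lead_coeff f = 1"
    and "is_CGM2 f g1 g2 g3"
    and "C = code2 f g1 g2 g3"
  shows "(C = dual2 f C \<longleftrightarrow>
            (degree g1 + degree g3 = degree f \<and> f dvd g3 ^ 2 \<and> f dvd g2 * g3 \<and>
             f dvd g1 ^ 2 + g2 ^ 2 \<and> g1 ^ 2 dvd f))
       \<and> ((degree g1 + degree g3 = degree f \<and> f dvd g3 ^ 2 \<and> f dvd g2 * g3 \<and>
             f dvd g1 ^ 2 + g2 ^ 2 \<and> g1 ^ 2 dvd f) \<longleftrightarrow>
          (\<exists>g' f' r. g' ^ 2 = r * f' - 1 \<and> f = g1 ^ 2 * f' \<and> g3 = g1 * f' \<and> g2 = g1 * g'))"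
proof -
  note cgm = assms(2)[unfolded is_CGM2_def]
  have l1: "lead_coeff g1 = 1" and l3: "lead_coeff g3 = 1" and d1: "g1 dvd f" and d3: "g3 dvd f"
    and dg1: "degree g1 < degree f" and dg3: "degree g3 < degree f" and A2: "A_elem f g2"
    and d32: "g3 dvd (f div g1) * g2" using cgm by auto
  have f0: "f \<noteq> 0" using assms(1) by auto
  have g10: "g1 \<noteq> 0" using l1 by auto
  have g30: "g3 \<noteq> 0" using l3 by auto
  have degf: "degree f > 0" using dg1 by simp
  have A1: "A_elem f g1" using dg1 unfolding A_elem_def by (simp add: mod_poly_less)
  have A3: "A_elem f g3" using dg3 unfolding A_elem_def by (simp add: mod_poly_less)
  note DM = dual_mem[OF degf A1 A2 A3]
  have g1one: "g1 = 1" if "degree g1 = 0"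
  proof -
    have "[:coeff g1 0:] = g1" using that by (rule degree_0_id)
    thus ?thesis using l1 that by (simp add: one_pCons)
  qed

  define P2 where "P2 \<longleftrightarrow> (degree g1 + degree g3 = degree f \<and> f dvd g3 ^ 2 \<and> f dvd g2 * g3 \<and>
             f dvd g1 ^ 2 + g2 ^ 2 \<and> g1 ^ 2 dvd f)"
  define P3 where "P3 \<longleftrightarrow> (\<exists>g' f' r. g' ^ 2 = r * f' - 1 \<and> f = g1 ^ 2 * f' \<and> g3 = g1 * f' \<and> g2 = g1 * g')"
  have lf': "lead_coeff f' = 1" if "f = g1^2 * f'" for f'
    using that assms(1) l1 by (simp add: lead_coeff_mult lead_coeff_power)
  have "P2 \<longleftrightarrow> P3"
  proof
    assume P2
    then obtain f' g' r where h: "f = g1^2 * f'" "g2 = g1 * g'" "g' ^ 2 = r * f' - 1" "g1 * f' dvd g3"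
      using core[OF l1] unfolding P2_def by blast
    have f'0: "f' \<noteq> 0" using h(1) f0 by auto
    have "degree f = 2 * degree g1 + degree f'" using h(1) g10 f'0
      by (simp add: degree_mult_eq degree_power_eq)
    hence "degree g3 \<le> degree (g1 * f')" using \<open>P2\<close> g10 f'0 unfolding P2_def
      by (simp add: degree_mult_eq)
    hence "g1 * f' = g3" using monic_dvd_eq[OF _ l3 h(4)] lf'[OF h(1)] l1
      by (simp add: lead_coeff_mult)
    thus P3 unfolding P3_def using h by metis
  next
    assume P3
    then obtain g' f' r where h: "g' ^ 2 = r * f' - 1" "f = g1 ^ 2 * f'" "g3 = g1 * f'" "g2 = g1 * g'"
      unfolding P3_def by blast
    have f'0: "f' \<noteq> 0" using h(2) f0 by auto
    have "degree f = 2 * degree g1 + degree f'" using h(2) g10 f'0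
      by (simp add: degree_mult_eq degree_power_eq)
    moreover have "degree g3 = degree g1 + degree f'" using h(3) g10 f'0 by (simp add: degree_mult_eq)
    ultimately have 1: "degree g1 + degree g3 = degree f" by simp
    have 2: "g3^2 = f * f'" using h by (simp add: power2_eq_square algebra_simps)
    have 3: "g2 * g3 = f * g'" using h by (simp add: power2_eq_square algebra_simps)
    have "g1^2 + g2^2 = g1^2 * (1 + g'^2)" using h(4) by (simp add: power2_eq_square algebra_simps)
    also have "1 + g'^2 = r*f'" using h(1) by simp
    also have "g1^2 * (r*f') = f * r" using h(2) by (simp add: algebra_simps)
    finally have 4: "g1^2 + g2^2 = f * r" .
    show P2 unfolding P2_def using 1 2 3 4 h(2) by simp
  qed
  moreover have "P3 \<Longrightarrow> C = dual2 f C"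
  proof -
    assume P3
    then obtain g' f' r where h: "g' ^ 2 = r * f' - 1" "f = g1 ^ 2 * f'" "g3 = g1 * f'" "g2 = g1 * g'"
      unfolding P3_def by blast
    have f'0: "f' \<noteq> 0" using h(2) f0 by auto
    have e: "r * f' = 1 + g'^2" using h(1) by (simp add: algebra_simps)
    have D: "f dvd a*(g1^2+g2^2) + b*(g2*g3)" "f dvd a*(g2*g3) + b*(g3^2)" for a b
    proof -
      have q: "g1^2+g2^2 = f*r"
      proof -
        have "g1^2+g2^2 = g1^2*(1+g'^2)" using h(4) by (simp add: power2_eq_square algebra_simps)
        also have "1+g'^2 = r*f'" using e by simp
        also have "g1^2*(r*f') = f*r" using h(2) by (simp add: algebra_simps)
        finally show ?thesis .
      qed
      have "a*(g1^2+g2^2) + b*(g2*g3) = f * (a*r + b*g')"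
        by (simp only: q) (simp add: h power2_eq_square algebra_simps)
      thus "f dvd a*(g1^2+g2^2) + b*(g2*g3)" by simp
      have "a*(g2*g3) + b*(g3^2) = f * (a*g' + b*f')"
        using h by (simp add: power2_eq_square algebra_simps)
      thus "f dvd a*(g2*g3) + b*(g3^2)" by simp
    qed
    show "C = dual2 f C"
    proof (rule set_eqI, clarify)
      fix u v
      show "(u,v) \<in> C \<longleftrightarrow> (u,v) \<in> dual2 f C"
      proof
        assume "(u,v) \<in> C"
        then obtain a b where c: "u = (a*g1) mod f" "v = (a*g2+b*g3) mod f"
          using assms(3) unfolding code2_def by auto
        have "f dvd (a*g1)*g1 + (a*g2+b*g3)*g2" using D(1)[of a b]
          by (simp add: power2_eq_square algebra_simps)
        hence 1: "f dvd u*g1 + v*g2" using c dvd_mods[of f "a*g1" g1 "a*g2+b*g3" g2] by simp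
        have "f dvd (a*g2+b*g3)*g3" using D(2)[of a b]
          by (simp add: power2_eq_square algebra_simps)
        hence 2: "f dvd v*g3" using c dvd_mod1[of f "a*g2+b*g3" g3] by simp
        show "(u,v) \<in> dual2 f C" using DM 1 2 c assms(3) by (simp add: A_elem_def)
      next
        assume "(u,v) \<in> dual2 f C"
        hence H: "A_elem f u" "A_elem f v" "f dvd u*g1 + v*g2" "f dvd v*g3" using DM assms(3) by auto
        have "(g1*f') * g1 dvd (g1*f') * v" using H(4) h(2,3)
          by (simp add: power2_eq_square algebra_simps)
        hence "g1 dvd v" using g10 f'0 by simp
        then obtain w where w: "v = g1 * w" by blast
        have "g1 * (g1 * f') dvd g1 * (u + g1*g'*w)" using H(3) h(2,4) w
          by (simp add: power2_eq_square algebra_simps)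
        hence "g1 * f' dvd u + g1*g'*w" using g10 by simp
        then obtain t where t: "u + g1*g'*w = g1 * f' * t" by blast
        define a where "a = f'*t - g'*w"
        define b where "b = w*r - t*g'"
        have ua: "u = a * g1" unfolding a_def using t by (simp add: algebra_simps)
        have "a*g2 + b*g3 = g1*w*(r*f' - g'^2)" unfolding a_def b_def using h
          by (simp add: power2_eq_square algebra_simps)
        also have "\<dots> = v" using e w by simp
        finally have vb: "v = a*g2 + b*g3" by simp
        have "u = ((a mod f)*g1) mod f" using H(1) ua unfolding A_elem_def by (metis mod_mult_left_eq)
        moreover have "v = ((a mod f)*g2 + (b mod f)*g3) mod f" using H(2) vb unfolding A_elem_def
          by (metis mod_add_eq mod_mult_left_eq)
        ultimately show "(u,v) \<in> C" unfolding assms(3) code2_def using A_mod by blast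
      qed
    qed
  qed
  moreover have "C = dual2 f C \<Longrightarrow> P2"
  proof -
    assume E: "C = dual2 f C"
    have "(g1, g2) \<in> C" unfolding assms(3) code2_def mem_Collect_eq
      apply (rule exI[of _ 1], rule exI[of _ 0]) using A1 A2 degf unfolding A_elem_def
      by (simp add: mod_poly_less)
    hence "(g1, g2) \<in> dual2 f C" using E by simp
    hence a1: "f dvd g1^2 + g2^2" "f dvd g2*g3" using DM assms(3)
      by (auto simp: power2_eq_square mult.commute)
    have "(0, g3) \<in> C" unfolding assms(3) code2_def mem_Collect_eq
      apply (rule exI[of _ 0], rule exI[of _ 1]) using A3 degf unfolding A_elem_def
      by (simp add: mod_poly_less)
    hence "(0, g3) \<in> dual2 f C" using E by simp
    hence a2: "f dvd g3^2" using DM assms(3) by (auto simp: power2_eq_square)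
    have a3: "g1^2 dvd f"
    proof (cases "degree g1 = 0")
      case True thus ?thesis using g1one by simp
    next
      case False
      define h1 where "h1 = f div g1"
      have fh: "f = g1 * h1" unfolding h1_def using d1 by simp
      have "f dvd (h1 mod f) * g1" using dvd_mod1[of f h1 g1] fh by (simp add: mult.commute)
      hence "(h1 mod f, 0) \<in> dual2 f C" using DM assms(3) A_mod
        by (simp add: A_elem_def)
      hence "(h1 mod f, 0) \<in> C" using E by simp
      then obtain a where "h1 mod f = (a*g1) mod f" using assms(3) unfolding code2_def by auto
      hence "g1 dvd h1 mod f" using d1 by (metis dvd_mod dvd_triv_right)
      moreover have "degree h1 < degree f"
      proof -
        have "h1 \<noteq> 0" using fh f0 by auto
        hence "degree f = degree g1 + degree h1" using fh g10 by (simp add: degree_mult_eq)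
        thus ?thesis using False by simp
      qed
      ultimately have "g1 dvd h1" by (simp add: mod_poly_less)
      hence "g1 * g1 dvd g1 * h1" by simp
      thus ?thesis using fh by (simp add: power2_eq_square)
    qed
    obtain f' g' r where h: "f = g1^2 * f'" "g2 = g1 * g'" "g' ^ 2 = r * f' - 1" "g1 * f' dvd g3"
      using core[OF l1 a2 a1(2) a1(1) a3] by blast
    have f'0: "f' \<noteq> 0" using h(1) f0 by auto
    obtain k where k: "g3 = g1 * f' * k" using h(4) by blast
    have "(g1*f')*g2 = f*g'" using h(1,2) by (simp add: power2_eq_square algebra_simps)
    hence "f dvd (g1*f')*g2" by (metis dvd_triv_left)
    have "(g1*f')*g3 = f*(f'*k)" using h(1) k by (simp add: power2_eq_square algebra_simps)
    hence "f dvd (g1*f')*g3" by (metis dvd_triv_left)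
    have df: "degree f = 2 * degree g1 + degree f'" using h(1) g10 f'0
      by (simp add: degree_mult_eq degree_power_eq)
    have dd: "degree (g1*f') = degree g1 + degree f'" using g10 f'0 by (simp add: degree_mult_eq)
    show P2
    proof (cases "degree g1 = 0")
      case True
      hence "g1 * f' = f" using g1one h(1) by simp
      hence "degree f \<le> degree g3" using h(4) g30 by (metis dvd_imp_degree_le)
      thus P2 using dg3 by simp
    next
      case False
      have m: "(g1*f') mod f = g1*f'" using False df dd by (simp add: mod_poly_less)
      have "f dvd 0*g1 + ((g1*f') mod f)*g2" "f dvd ((g1*f') mod f)*g3"
        using m \<open>f dvd (g1*f')*g2\<close> \<open>f dvd (g1*f')*g3\<close> by simp_all
      hence "(0, (g1*f') mod f) \<in> dual2 f C" using DM assms(3) A_mod by (simp add: A_elem_def)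
      hence "(0, (g1*f') mod f) \<in> C" using E by simp
      then obtain a b where ab: "0 = (a*g1) mod f" "(g1*f') mod f = (a*g2+b*g3) mod f"
        using assms(3) unfolding code2_def by blast
      have "f dvd a*g1" using ab(1) by (simp add: dvd_eq_mod_eq_0)
      then obtain s where "a*g1 = f*s" by blast
      hence "g1*a = g1*((f div g1)*s)" using d1 by (simp add: algebra_simps)
      hence "a = (f div g1)*s" using g10 by simp
      hence "g3 dvd a*g2" using d32 by (metis dvd_mult2 mult.assoc mult.commute)
      hence "g3 dvd a*g2 + b*g3" by simp
      hence "g3 dvd (a*g2+b*g3) mod f" using d3 by (rule dvd_mod)
      hence "g3 dvd g1*f'" using ab(2) m by simp
      hence "degree g3 \<le> degree (g1 * f')" using False g10 f'0 by (simp add: dvd_imp_degree_le)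
      hence "g1 * f' = g3" using monic_dvd_eq[OF _ l3 h(4)] lf'[OF h(1)] l1
        by (simp add: lead_coeff_mult)
      hence "degree g1 + degree g3 = degree f" using df dd by simp
      thus P2 unfolding P2_def using a1 a2 a3 by simp
    qed
  qed
  ultimately show ?thesis unfolding P2_def P3_def by blast
qed

end
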